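(* Let $\nu\in\left(-1,-\tfrac12\right)$. Then there exists $z_\nu\ge j_{\nu,1}$ such that $x\mapsto\mathcal{I}_\nu(x)$ is strictly log-convex on $(0,z_\nu)$ and strictly log-concave on $(z_\nu,\infty)$. In particular, $\mathcal{I}_\nu$ is not log-convex on all of $\mathbb{R}$ for such $\nu$.
   Context: For $\nu>-1$ define $\mathcal{I}_\nu:\mathbb{R}\to[1,\infty)$ by $\mathcal{I}_\nu(x)=\sum_{n\ge0}\frac{(1/4)^n}{(\nu+1)_n\, n!}x^{2n}$, where $(a)_n=a(a+1)\cdots(a+n-1)$, $(a)_0=1$; equivalently $\mathcal{I}_\nu(x)=2^\nu\Gamma(\nu+1)x^{-\nu}I_\nu(x)$ for $x>0$, with $I_\nu$ the modified Bessel function of the first kind. $j_{\nu,1}$ is the first positive zero of the Bessel function of the first kind $J_\nu$. *)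

theory Defs
  imports "HOL-Analysis.Analysis"
begin

definition calI :: "real \<Rightarrow> real \<Rightarrow> real" where
  "calI \<nu> x = (\<Sum>n. (1/4) ^ n / (pochhammer (\<nu> + 1) n * fact n) * x ^ (2 * n))"

text \<open>Bessel function of the first kind, for x > 0.\<close>
definition besselJ :: "real \<Rightarrow> real \<Rightarrow> real" where
  "besselJ \<nu> x = (\<Sum>n. (-1) ^ n / (fact n * Gamma (real n + \<nu> + 1)) * (x / 2) powr (2 * real n + \<nu>))"

definition first_zero_J :: "real \<Rightarrow> real" where
  "first_zero_J \<nu> = (THE j. 0 < j \<and> besselJ \<nu> j = 0 \<and> (\<forall>x. 0 < x \<and> x < j \<longrightarrow> besselJ \<nu> x \<noteq> 0))"

definition strict_convex_on :: "real set \<Rightarrow> (real \<Rightarrow> real) \<Rightarrow> bool" where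
  "strict_convex_on S f \<longleftrightarrow> convex S \<and>
    (\<forall>x\<in>S. \<forall>y\<in>S. \<forall>u::real. x \<noteq> y \<and> 0 < u \<and> u < 1 \<longrightarrow>
       f (u * x + (1 - u) * y) < u * f x + (1 - u) * f y)"

definition strict_concave_on :: "real set \<Rightarrow> (real \<Rightarrow> real) \<Rightarrow> bool" where
  "strict_concave_on S f \<longleftrightarrow> strict_convex_on S (\<lambda>x. - f x)"

end

theory Submission
  imports Defs
begin


definition bc :: "real \<Rightarrow> nat \<Rightarrow> real" where
  "bc \<mu> n = 1 / (pochhammer \<mu> n * fact n)"

definition S0 :: "real \<Rightarrow> real \<Rightarrow> real" where "S0 \<mu> t = (\<Sum>n. bc \<mu> n * t ^ n)"
definition S1 :: "real \<Rightarrow> real \<Rightarrow> real" where "S1 \<mu> t = (\<Sum>n. diffs (bc \<mu>) n * t ^ n)"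
definition S2 :: "real \<Rightarrow> real \<Rightarrow> real" where "S2 \<mu> t = (\<Sum>n. diffs (diffs (bc \<mu>)) n * t ^ n)"

lemma poch_ge: assumes "\<mu> > 0" shows "pochhammer \<mu> n \<ge> min 1 (\<mu>::real)"
proof (induction n)
  case 0 then show ?case by simp
next
  case (Suc n)
  show ?case
  proof (cases n)
    case 0 then show ?thesis by (simp add: pochhammer_Suc)
  next
    case (Suc m)
    have "pochhammer \<mu> n \<le> pochhammer \<mu> n * (\<mu> + real n)"
      using pochhammer_pos[OF assms, of n] Suc assms by (intro mult_le_cancel_left1[THEN iffD2]) auto
    with Suc.IH show ?thesis by (simp add: pochhammer_Suc)
  qed
qed

lemma bc_pos: "\<mu> > 0 \<Longrightarrow> bc \<mu> n > 0"
  unfolding bc_def using pochhammer_pos[of \<mu> n] by simp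

lemma bc_Suc: assumes "\<mu> > 0" shows "bc \<mu> (Suc n) = bc \<mu> n / ((\<mu> + real n) * real (Suc n))"
  using pochhammer_pos[OF assms, of n] assms unfolding bc_def
  by (simp add: pochhammer_Suc field_simps)

lemma bc_summable: assumes "\<mu> > 0" shows "summable (\<lambda>n. bc \<mu> n * t ^ n)"
proof (rule summable_comparison_test)
  let ?C = "1 / min 1 \<mu>"
  show "summable (\<lambda>n. ?C * (inverse (fact n) * \<bar>t\<bar> ^ n))"
    by (intro summable_mult summable_exp)
  show "\<exists>N. \<forall>n\<ge>N. norm (bc \<mu> n * t ^ n) \<le> ?C * (inverse (fact n) * \<bar>t\<bar> ^ n)"
  proof (intro exI allI impI)
    fix n :: nat
    have p: "pochhammer \<mu> n \<ge> min 1 \<mu>" by (rule poch_ge[OF assms])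
    have m: "min 1 \<mu> > 0" using assms by simp
    have "bc \<mu> n \<le> ?C * inverse (fact n)"
      unfolding bc_def using p m pochhammer_pos[OF assms, of n]
      by (simp add: field_simps divide_le_eq_1 frac_le)
    then have "bc \<mu> n * \<bar>t\<bar>^n \<le> ?C * inverse (fact n) * \<bar>t\<bar>^n"
      by (intro mult_right_mono) auto
    then show "norm (bc \<mu> n * t ^ n) \<le> ?C * (inverse (fact n) * \<bar>t\<bar> ^ n)"
      using bc_pos[OF assms, of n] by (simp add: abs_mult power_abs mult.assoc)
  qed
qed

lemma d1_summable: "\<mu> > 0 \<Longrightarrow> summable (\<lambda>n. diffs (bc \<mu>) n * t ^ n)"
  by (rule termdiff_converges_all) (rule bc_summable)
lemma d2_summable: "\<mu> > 0 \<Longrightarrow> summable (\<lambda>n. diffs (diffs (bc \<mu>)) n * t ^ n)"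
  by (rule termdiff_converges_all, rule termdiff_converges_all) (rule bc_summable)

lemma S0_deriv: "\<mu> > 0 \<Longrightarrow> (S0 \<mu> has_real_derivative S1 \<mu> t) (at t)"
  unfolding S0_def[abs_def] S1_def
  by (rule termdiffs_strong_converges_everywhere) (rule bc_summable)
lemma S1_deriv: "\<mu> > 0 \<Longrightarrow> (S1 \<mu> has_real_derivative S2 \<mu> t) (at t)"
  unfolding S1_def[abs_def] S2_def
  by (rule termdiffs_strong_converges_everywhere) (rule d1_summable)

lemma diffs_bc: "diffs (bc \<mu>) n = real (Suc n) * bc \<mu> (Suc n)"
  by (simp add: diffs_def)

lemma ODE: assumes "\<mu> > 0" shows "t * S2 \<mu> t + \<mu> * S1 \<mu> t = S0 \<mu> t"
proof -
  define h where "h m = real m * diffs (bc \<mu>) m * t ^ m" for m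
  have "(\<lambda>n. t * (diffs (diffs (bc \<mu>)) n * t ^ n)) sums (t * S2 \<mu> t)"
    unfolding S2_def by (intro sums_mult summable_sums d2_summable assms)
  moreover have "(\<lambda>n. t * (diffs (diffs (bc \<mu>)) n * t ^ n)) = (\<lambda>n. h (Suc n))"
    by (auto simp: h_def diffs_def algebra_simps)
  ultimately have "(\<lambda>n. h (Suc n)) sums (t * S2 \<mu> t)" by simp
  then have "h sums (t * S2 \<mu> t + h 0)" by (simp only: sums_Suc_iff)
  then have "h sums (t * S2 \<mu> t)" by (simp add: h_def)
  moreover have "(\<lambda>n. \<mu> * (diffs (bc \<mu>) n * t ^ n)) sums (\<mu> * S1 \<mu> t)"
    unfolding S1_def by (intro sums_mult summable_sums d1_summable assms)
  ultimately have "(\<lambda>n. h n + \<mu> * (diffs (bc \<mu>) n * t ^ n)) sums (t * S2 \<mu> t + \<mu> * S1 \<mu> t)"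
    by (rule sums_add)
  moreover have "(\<lambda>n. h n + \<mu> * (diffs (bc \<mu>) n * t ^ n)) = (\<lambda>n. bc \<mu> n * t ^ n)"
  proof
    fix n
    have "h n + \<mu> * (diffs (bc \<mu>) n * t ^ n) = (real n + \<mu>) * real (Suc n) * bc \<mu> (Suc n) * t^n"
      by (simp add: h_def diffs_bc algebra_simps)
    also have "\<dots> = bc \<mu> n * t ^ n"
      using assms by (simp add: bc_Suc add.commute)
    finally show "h n + \<mu> * (diffs (bc \<mu>) n * t ^ n) = bc \<mu> n * t ^ n" .
  qed
  ultimately have "(\<lambda>n. bc \<mu> n * t ^ n) sums (t * S2 \<mu> t + \<mu> * S1 \<mu> t)" by simp
  then show ?thesis unfolding S0_def by (simp add: sums_iff)
qed

lemma calI_eq: "calI \<nu> x = S0 (\<nu>+1) (x^2/4)"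
  unfolding calI_def S0_def bc_def
proof (rule arg_cong[where f=suminf], rule ext)
  fix n
  have "(x^2/4)^n = (1/4)^n * x^(2*n)" by (simp add: power_mult power_divide)
  then show "(1 / 4) ^ n / (pochhammer (\<nu> + 1) n * fact n) * x ^ (2 * n) =
         1 / (pochhammer (\<nu> + 1) n * fact n) * (x\<^sup>2 / 4) ^ n" by simp
qed

lemma bessel_eq:
  assumes "\<nu> > -1" "x > 0"
  shows "besselJ \<nu> x = (x/2) powr \<nu> / Gamma (\<nu>+1) * S0 (\<nu>+1) (-(x^2/4))"
proof -
  have g: "Gamma (\<nu>+1) > 0" using assms by simp
  have ni: "\<nu> + 1 \<notin> \<int>\<^sub>\<le>\<^sub>0" using assms by auto
  have t: "(-1) ^ n / (fact n * Gamma (real n + \<nu> + 1)) * (x / 2) powr (2 * real n + \<nu>)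
        = (x/2) powr \<nu> / Gamma (\<nu>+1) * (bc (\<nu>+1) n * (-(x^2/4))^n)" for n
  proof -
    have G: "Gamma (real n + \<nu> + 1) = pochhammer (\<nu>+1) n * Gamma (\<nu>+1)"
      using pochhammer_Gamma[OF ni, of n] g by (simp add: field_simps)
    have P: "(x / 2) powr (2 * real n + \<nu>) = (x/2)^(2*n) * (x/2) powr \<nu>"
      using assms by (simp add: powr_add powr_realpow[symmetric])
    have Q: "(-(x^2/4))^n = (-1)^n * (x/2)^(2*n)"
      by (simp add: power_mult power_divide power_minus[of "x^2/4"])
    show ?thesis unfolding G P Q bc_def using g pochhammer_pos[of "\<nu>+1" n] assms
      by (simp add: field_simps)
  qed
  show ?thesis unfolding besselJ_def t S0_def
    by (rule suminf_mult) (rule bc_summable, use assms in simp)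
qed



lemma S0_chain[derivative_intros]:
  assumes "\<mu> > 0" "(g has_real_derivative g') (at x within s)"
  shows "((\<lambda>x. S0 \<mu> (g x)) has_real_derivative S1 \<mu> (g x) * g') (at x within s)"
  by (rule DERIV_chain2[OF S0_deriv[OF assms(1)] assms(2)])
lemma S1_chain[derivative_intros]:
  assumes "\<mu> > 0" "(g has_real_derivative g') (at x within s)"
  shows "((\<lambda>x. S1 \<mu> (g x)) has_real_derivative S2 \<mu> (g x) * g') (at x within s)"
  by (rule DERIV_chain2[OF S1_deriv[OF assms(1)] assms(2)])

lemma S0_ge: assumes "\<mu> > 0" "t \<ge> 0" shows "(\<Sum>n<k. bc \<mu> n * t^n) \<le> S0 \<mu> t"
  unfolding S0_def using assms bc_pos[OF assms(1)]
  by (intro sum_le_suminf bc_summable) (auto intro!: mult_nonneg_nonneg intro: less_imp_le)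

lemma S1_ge: assumes "\<mu> > 0" "t \<ge> 0" shows "(\<Sum>n<k. diffs (bc \<mu>) n * t^n) \<le> S1 \<mu> t"
  unfolding S1_def using assms bc_pos[OF assms(1)]
  by (intro sum_le_suminf d1_summable) (auto simp: diffs_bc intro!: mult_nonneg_nonneg intro: less_imp_le)

lemma bc0: "bc \<mu> 0 = 1" by (simp add: bc_def)
lemma bc1: "bc \<mu> 1 = 1/\<mu>" by (simp add: bc_def)
lemma bc2: "bc \<mu> 2 = 1/(2*\<mu>*(\<mu>+1))" by (simp add: bc_def eval_nat_numeral pochhammer_Suc)
lemma bc3: "bc \<mu> 3 = 1/(6*\<mu>*(\<mu>+1)*(\<mu>+2))"
  by (simp add: bc_def eval_nat_numeral pochhammer_Suc field_simps)

lemma S0_pos: "\<mu> > 0 \<Longrightarrow> t \<ge> 0 \<Longrightarrow> S0 \<mu> t \<ge> 1"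
  using S0_ge[of \<mu> t 1] by (simp add: bc0)
lemma S1_pos: "\<mu> > 0 \<Longrightarrow> t \<ge> 0 \<Longrightarrow> S1 \<mu> t \<ge> 1/\<mu>"
  using S1_ge[of \<mu> t 1] by (simp add: diffs_bc bc_def)

definition Dfun :: "real \<Rightarrow> real \<Rightarrow> real" where
  "Dfun \<mu> t = 2 * S0 \<mu> t ^ 2 + (1 - 2*\<mu>) * S0 \<mu> t * S1 \<mu> t - 2 * t * S1 \<mu> t ^ 2"

definition Mfun :: "real \<Rightarrow> real \<Rightarrow> real" where
  "Mfun \<mu> t = t powr (\<mu> - 1/2) * Dfun \<mu> t"

lemma Dfun_deriv: assumes "\<mu> > 0"
  shows "(Dfun \<mu> has_real_derivative
     (4 * S0 \<mu> t * S1 \<mu> t + (1 - 2*\<mu>) * (S1 \<mu> t * S1 \<mu> t + S0 \<mu> t * S2 \<mu> t)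
      - 2 * S1 \<mu> t ^ 2 - 4 * t * S1 \<mu> t * S2 \<mu> t)) (at t)"
  unfolding Dfun_def[abs_def]
  by (rule derivative_eq_intros refl assms | simp)+
     (simp add: algebra_simps power2_eq_square)

lemma Dder_eq: assumes "\<mu> > 0"
  shows "2 * t * (4 * S0 \<mu> t * S1 \<mu> t + (1 - 2*\<mu>) * (S1 \<mu> t * S1 \<mu> t + S0 \<mu> t * S2 \<mu> t)
      - 2 * S1 \<mu> t ^ 2 - 4 * t * S1 \<mu> t * S2 \<mu> t)
    = (2*\<mu>-1) * (S0 \<mu> t * S1 \<mu> t - Dfun \<mu> t)"
proof -
  have e: "t * S2 \<mu> t = S0 \<mu> t - \<mu> * S1 \<mu> t" using ODE[OF assms, of t] by simp
  have "2 * t * (4 * S0 \<mu> t * S1 \<mu> t + (1 - 2*\<mu>) * (S1 \<mu> t * S1 \<mu> t + S0 \<mu> t * S2 \<mu> t)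
      - 2 * S1 \<mu> t ^ 2 - 4 * t * S1 \<mu> t * S2 \<mu> t)
     = 2 * (4*t*S0 \<mu> t * S1 \<mu> t + (1-2*\<mu>)*t*S1 \<mu> t^2 + (1-2*\<mu>)*S0 \<mu> t*(t * S2 \<mu> t)
       - 2*t*S1 \<mu> t^2 - 4*t*S1 \<mu> t*(t * S2 \<mu> t))"
    by (simp add: algebra_simps power2_eq_square)
  also have "\<dots> = (2*\<mu>-1) * (S0 \<mu> t * S1 \<mu> t - Dfun \<mu> t)"
    unfolding e Dfun_def by (simp add: algebra_simps power2_eq_square)
  finally show ?thesis .
qed

lemma Mfun_deriv: assumes "\<mu> > 0" "t > 0"
  shows "(Mfun \<mu> has_real_derivative
     t powr (\<mu> - 1/2) * ((2*\<mu>-1)/(2*t)) * (S0 \<mu> t * S1 \<mu> t)) (at t)"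
proof -
  let ?Dd = "4 * S0 \<mu> t * S1 \<mu> t + (1 - 2*\<mu>) * (S1 \<mu> t * S1 \<mu> t + S0 \<mu> t * S2 \<mu> t)
      - 2 * S1 \<mu> t ^ 2 - 4 * t * S1 \<mu> t * S2 \<mu> t"
  have "(Mfun \<mu> has_real_derivative
     (\<mu> - 1/2) * t powr (\<mu> - 1/2 - 1) * Dfun \<mu> t + t powr (\<mu> - 1/2) * ?Dd) (at t)"
    unfolding Mfun_def[abs_def]
    using DERIV_mult[OF has_real_derivative_powr[OF assms(2)] Dfun_deriv[OF assms(1)], of "\<mu> - 1/2"]
    by (simp add: algebra_simps)
  moreover have "(\<mu> - 1/2) * t powr (\<mu> - 1/2 - 1) * Dfun \<mu> t + t powr (\<mu> - 1/2) * ?Dd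
     = t powr (\<mu> - 1/2) * ((2*\<mu>-1)/(2*t)) * (S0 \<mu> t * S1 \<mu> t)"
  proof -
    have p: "t powr (\<mu> - 1/2 - 1) = t powr (\<mu> - 1/2) / t"
      using assms by (simp only: powr_diff[of t "\<mu> - 1/2" 1] powr_one less_imp_le)
    have q: "?Dd = ((2*\<mu>-1)/2) * (S0 \<mu> t * S1 \<mu> t - Dfun \<mu> t) / t"
      using Dder_eq[OF assms(1), of t] assms(2) by (simp add: field_simps)
    show ?thesis unfolding p q using assms by (simp add: field_simps)
  qed
  ultimately show ?thesis by simp
qed



lemma bc1s: "bc \<mu> (Suc 0) = 1/\<mu>" by (simp add: bc_def)
lemma bc2s: "bc \<mu> (Suc (Suc 0)) = 1/(2*\<mu>*(\<mu>+1))" using bc2[of \<mu>] by (simp add: numeral_eq_Suc)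
lemma bc3s: "bc \<mu> (Suc (Suc (Suc 0))) = 1/(6*\<mu>*(\<mu>+1)*(\<mu>+2))" using bc3[of \<mu>] by (simp add: numeral_eq_Suc)

lemma tq1: "0 < \<mu> \<Longrightarrow> (\<mu>*(1+\<mu>))/\<mu> = 1+(\<mu>::real)" by simp
lemma tq2: assumes "0 < (\<mu>::real)" shows "(\<mu>*(1+\<mu>))^2/(2*\<mu>*(\<mu>+1)) = \<mu>*(1+\<mu>)/2"
proof -
  have nz: "2*\<mu>*(\<mu>+1) \<noteq> 0" using assms by simp
  have tt: "(\<mu>*(1+\<mu>))^2 = (2*\<mu>*(\<mu>+1)) * (\<mu>*(1+\<mu>)/2)" by (simp add: power2_eq_square field_simps)
  show ?thesis by (simp only: tt nonzero_mult_div_cancel_left[OF nz])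
qed
lemma tq3: "0 < \<mu> \<Longrightarrow> (\<mu>*(1+\<mu>))/(\<mu>*(\<mu>+1)) = (1::real)" by (simp add: add.commute)

lemma alt_neg: assumes m: "0 < \<mu>" "\<mu> < 1/2"
  shows "S0 \<mu> (-(\<mu>*(1+\<mu>))) < 0"
proof -
  define t where "t = \<mu>*(1+\<mu>)"
  have t0: "t > 0" using m unfolding t_def by simp
  have "\<mu>*(1+\<mu>) \<le> (1/2)*(1+1/2)" using m by (intro mult_mono) auto
  then have t1: "t \<le> 3/4" unfolding t_def by simp
  define c where "c n = bc \<mu> n * t ^ n" for n
  define g where "g n = bc \<mu> n * (-t) ^ n" for n
  have gc: "g n = (-1)^n * c n" for n unfolding g_def c_def power_minus[of t n] by simp
  have c0: "c n \<ge> 0" for n unfolding c_def using bc_pos[OF m(1)] t0 by (simp add: less_imp_le)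
  have cdec: "c (Suc k) \<le> c k" if "k \<ge> 1" for k
  proof -
    have r: "c (Suc k) = c k * (t / ((\<mu> + real k) * real (Suc k)))"
      unfolding c_def using bc_Suc[OF m(1), of k] by (simp add: field_simps)
    have "(\<mu> + real k) * real (Suc k) \<ge> 1 * 2"
      using that m by (intro mult_mono) auto
    then have "t / ((\<mu> + real k) * real (Suc k)) \<le> 1" using t0 t1 by (simp add: divide_le_eq_1)
    then show ?thesis unfolding r by (rule mult_left_le) (rule c0)
  qed
  have sg: "summable g" unfolding g_def by (rule bc_summable[OF m(1)])
  have split: "S0 \<mu> (-t) = (\<Sum>n. g (n+3)) + (\<Sum>i<3. g i)"
    unfolding S0_def g_def[symmetric] by (rule suminf_split_initial_segment[OF sg])
  have "(\<lambda>n. g (n+3)) sums (\<Sum>n. g (n+3))"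
    using sg by (intro summable_sums) (simp add: summable_iff_shift[of g 3])
  then have gs: "(\<lambda>n. sum (\<lambda>i. g (i+3)) {n*2..<n*2+2}) sums (\<Sum>n. g (n+3))"
    by (rule sums_group) simp
  have "(\<Sum>n. g (n+3)) \<le> 0"
  proof (rule sums_le[OF _ gs sums_zero])
    fix n
    have e: "sum (\<lambda>i. g (i+3)) {n*2..<n*2+2} = g (2*n+3) + g (2*n+4)"
      by (simp add: numeral_eq_Suc algebra_simps)
    have e4: "2*n+4 = Suc (2*n+3)" by simp
    have "g (2*n+3) = - c (2*n+3)" unfolding gc by (simp add: power_add)
    moreover have "g (2*n+4) = c (2*n+4)" unfolding gc by (simp add: power_add)
    moreover have "c (2*n+4) \<le> c (2*n+3)" unfolding e4 by (rule cdec) simp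
    ultimately show "sum (\<lambda>i. g (i+3)) {n*2..<n*2+2} \<le> 0" unfolding e by simp
  qed
  moreover have "(\<Sum>i<3. g i) = \<mu>*(\<mu>-1)/2"
  proof -
    have "(\<Sum>i<3. g i) = g 0 + g 1 + g 2" by (simp add: numeral_eq_Suc)
    also have "\<dots> = 1 - t/\<mu> + t^2/(2*\<mu>*(\<mu>+1))"
      unfolding g_def by (simp add: bc0 bc1s bc2s numeral_eq_Suc)
    also have "\<dots> = 1 - (1+\<mu>) + \<mu>*(1+\<mu>)/2" unfolding t_def using m by (simp only: tq1 tq2)
    also have "\<dots> = \<mu>*(\<mu>-1)/2" by (simp add: field_simps)
    finally show ?thesis .
  qed
  ultimately have "S0 \<mu> (-t) \<le> \<mu>*(\<mu>-1)/2" unfolding split by simp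
  also have "\<dots> < 0" using m by (simp add: mult_pos_neg)
  finally show ?thesis unfolding t_def .
qed

lemma poly_pos: assumes "0 < (\<mu>::real)" "\<mu> < 1/2"
  shows "6 + 2*\<mu> - 21/2*\<mu>^2 - 17*\<mu>^3 - 13*\<mu>^4 - 6*\<mu>^5 - 3/2*\<mu>^6 > 0"
proof -
  have "\<mu>^k \<le> (1/2)^k" for k using assms by (intro power_mono) auto
  from this[of 2] this[of 3] this[of 4] this[of 5] this[of 6] show ?thesis using assms
    by (simp add: power_divide)
qed

lemma Eid: assumes m: "0 < (\<mu>::real)" shows
  "\<mu> * (2+\<mu>)^2 * (2*(2 + \<mu> + \<mu>*(1+\<mu>)/2)^2 + (1-2*\<mu>) * ((2 + \<mu> + \<mu>*(1+\<mu>)/2) * (1/\<mu> + 1)) - 2 * (\<mu>*(1+\<mu>) * (1/\<mu> + 1 + \<mu>*(1+\<mu>)/(2+\<mu>))^2))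
   = \<mu> * (6 + 2*\<mu> - 21/2*\<mu>^2 - 17*\<mu>^3 - 13*\<mu>^4 - 6*\<mu>^5 - 3/2*\<mu>^6)"
proof -
  define Fl where "Fl = 2 + \<mu> + \<mu>*(1+\<mu>)/2"
  define Qn where "Qn = (1+\<mu>)*(2+\<mu>) + \<mu>^2*(1+\<mu>)"
  have h: "1/\<mu> + 1 + \<mu>*(1+\<mu>)/(2+\<mu>) = Qn/(\<mu>*(2+\<mu>))"
    unfolding Qn_def using m by (simp add: field_simps power2_eq_square)
  have h2: "\<mu> * (2+\<mu>)^2 * ((1-2*\<mu>) * (Fl * (1/\<mu> + 1))) = (1-2*\<mu>) * Fl * (1+\<mu>) * (2+\<mu>)^2"
    using m by (simp add: field_simps)
  have h3: "\<mu> * (2+\<mu>)^2 * (2 * (\<mu>*(1+\<mu>) * (Qn/(\<mu>*(2+\<mu>)))^2)) = 2*(1+\<mu>)*Qn^2"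
  proof -
    define s where "s = \<mu>*(2+\<mu>)"
    have s0: "s \<noteq> 0" unfolding s_def using m by simp
    have "\<mu> * (2+\<mu>)^2 * (2 * (\<mu>*(1+\<mu>) * (Qn/(\<mu>*(2+\<mu>)))^2)) = 2*(1+\<mu>)*(s^2*(Qn/s)^2)"
      unfolding s_def by (simp add: algebra_simps power2_eq_square)
    also have "s^2*(Qn/s)^2 = Qn^2" using s0 by (simp add: power_divide)
    finally show ?thesis .
  qed
  have "\<mu> * (2+\<mu>)^2 * (2*Fl^2 + (1-2*\<mu>) * (Fl * (1/\<mu> + 1)) - 2 * (\<mu>*(1+\<mu>) * (Qn/(\<mu>*(2+\<mu>)))^2))
     = \<mu> * (2+\<mu>)^2 * (2*Fl^2) + (1-2*\<mu>) * Fl * (1+\<mu>) * (2+\<mu>)^2 - 2*(1+\<mu>)*Qn^2"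
    using h2 h3 by (simp add: algebra_simps)
  also have "\<dots> = \<mu> * (6 + 2*\<mu> - 21/2*\<mu>^2 - 17*\<mu>^3 - 13*\<mu>^4 - 6*\<mu>^5 - 3/2*\<mu>^6)"
    unfolding Fl_def Qn_def by (simp add: field_simps eval_nat_numeral)
  finally show ?thesis unfolding h Fl_def .
qed

lemma D_pos: assumes m: "0 < \<mu>" "\<mu> < 1/2"
  shows "Dfun \<mu> (\<mu>*(1+\<mu>)) > 0"
proof -
  define t where "t = \<mu>*(1+\<mu>)"
  have t0: "t > 0" using m unfolding t_def by simp
  have "\<mu>*(1+\<mu>) \<le> (1/2)*(1+1/2)" using m by (intro mult_mono) auto
  then have t1: "t \<le> 3/4" unfolding t_def by simp
  define d where "d n = diffs (bc \<mu>) n * t ^ n" for n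
  define Flo where "Flo = 2 + \<mu> + \<mu>*(1+\<mu>)/2"
  define F1lo where "F1lo = 1/\<mu> + 1"
  define F1hi where "F1hi = 1/\<mu> + 1 + \<mu>*(1+\<mu>)/(2+\<mu>)"
  have "(\<Sum>n<3. bc \<mu> n * t^n) = 1 + t/\<mu> + t^2/(2*\<mu>*(\<mu>+1))"
    by (simp add: numeral_eq_Suc bc0 bc1s bc2s)
  moreover have "t/\<mu> = 1+\<mu>" unfolding t_def using m by simp
  moreover have "t^2/(2*\<mu>*(\<mu>+1)) = \<mu>*(1+\<mu>)/2"
  proof -
    have nz: "2*\<mu>*(\<mu>+1) \<noteq> 0" using m by simp
    have tt: "t^2 = (2*\<mu>*(\<mu>+1)) * (\<mu>*(1+\<mu>)/2)" unfolding t_def by (simp add: power2_eq_square field_simps)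
    show ?thesis by (simp only: tt nonzero_mult_div_cancel_left[OF nz])
  qed
  ultimately have "Flo = (\<Sum>n<3. bc \<mu> n * t^n)" unfolding Flo_def by simp
  then have Fge: "Flo \<le> S0 \<mu> t" using S0_ge[OF m(1), of t 3] t0 by simp
  have "(\<Sum>n<2. diffs (bc \<mu>) n * t^n) = 1/\<mu> + t/(\<mu>*(\<mu>+1))"
    by (simp add: numeral_eq_Suc diffs_bc bc1s bc2s)
  also have "\<dots> = F1lo" unfolding F1lo_def t_def using m by (simp only: tq3)
  finally have F1lo_eq: "F1lo = (\<Sum>n<2. diffs (bc \<mu>) n * t^n)" ..
  then have F1ge: "F1lo \<le> S1 \<mu> t" using S1_ge[OF m(1), of t 2] t0 by simp
  have d0: "d n \<ge> 0" for n unfolding d_def diffs_bc using bc_pos[OF m(1)] t0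
    by (simp add: less_imp_le)
  have drat: "d (Suc k) \<le> d k / 2" if "k \<ge> 2" for k
  proof -
    have b: "bc \<mu> (Suc (Suc k)) * ((\<mu> + real (Suc k)) * real (Suc (Suc k))) = bc \<mu> (Suc k)"
      using bc_Suc[OF m(1), of "Suc k"] m by (simp del: of_nat_Suc)
    have "d (Suc k) * (\<mu> + real (Suc k)) * real (Suc k)
        = (bc \<mu> (Suc (Suc k)) * ((\<mu> + real (Suc k)) * real (Suc (Suc k)))) * t^(Suc k) * real (Suc k)"
      unfolding d_def diffs_bc by (simp only: mult_ac)
    also have "\<dots> = d k * t" unfolding b d_def diffs_bc by (simp add: mult_ac)
    finally have e: "d (Suc k) * (\<mu> + real (Suc k)) * real (Suc k) = d k * t" .
    have "(\<mu> + real (Suc k)) * real (Suc k) \<ge> 3 * 3"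
      using that m by (intro mult_mono) auto
    then have "d (Suc k) * 9 \<le> d (Suc k) * ((\<mu> + real (Suc k)) * real (Suc k))"
      using d0[of "Suc k"] by (intro mult_left_mono) auto
    also have "\<dots> = d k * t" using e by (simp add: mult_ac)
    also have "\<dots> \<le> d k * (3/4)" using t1 d0[of k] by (intro mult_left_mono) auto
    finally have "d (Suc k) * 9 \<le> d k * (3/4)" .
    then show ?thesis using d0[of "Suc k"] d0[of k] by linarith
  qed
  have dgeo: "d (n+2) \<le> d 2 * (1/2)^n" for n
  proof (induction n)
    case 0 then show ?case by (simp add: numeral_2_eq_2)
  next
    case (Suc n)
    have "d (Suc n + 2) \<le> d (n+2) / 2" using drat[of "n+2"] by simp
    also have "\<dots> \<le> d 2 * (1/2)^n / 2" using Suc by simp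
    finally show ?case by simp
  qed
  have sd: "summable d" unfolding d_def by (rule d1_summable[OF m(1)])
  have geo: "(\<lambda>n. d 2 * (1/2::real)^n) sums (d 2 * 2)"
    using sums_mult[OF geometric_sums[of "1/2::real"], of "d 2"] by simp
  have "(\<Sum>n. d (n+2)) \<le> (\<Sum>n. d 2 * (1/2)^n)"
    by (rule suminf_le[OF dgeo]) (use sd summable_iff_shift[of d 2] geo in \<open>auto simp: sums_iff\<close>)
  also have "\<dots> = d 2 * 2" using geo by (simp add: sums_iff)
  finally have tail: "(\<Sum>n. d (n+2)) \<le> d 2 * 2" .
  have "S1 \<mu> t = (\<Sum>n. d (n+2)) + (\<Sum>i<2. d i)"
    unfolding S1_def d_def[symmetric] by (rule suminf_split_initial_segment[OF sd])
  also have "(\<Sum>i<2. d i) = F1lo"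
    using F1lo_eq unfolding d_def by simp
  finally have "S1 \<mu> t \<le> F1lo + d 2 * 2" using tail by simp
  also have "F1lo + d 2 * 2 = F1hi"
  proof -
    have nz: "6*\<mu>*(\<mu>+1)*(\<mu>+2) \<noteq> 0" using m by simp
    have nz2: "2+\<mu> \<noteq> 0" using m by simp
    have d2: "d 2 * 2 = 6*t^2 / (6*\<mu>*(\<mu>+1)*(\<mu>+2))" unfolding d_def diffs_bc by (simp add: bc3)
    have tt: "6*t^2 = (6*\<mu>*(\<mu>+1)*(\<mu>+2)) * (\<mu>*(1+\<mu>)/(2+\<mu>))"
      unfolding t_def using nz2 by (simp add: field_simps power2_eq_square)
    have "d 2 * 2 = \<mu>*(1+\<mu>)/(2+\<mu>)" by (simp only: d2 tt nonzero_mult_div_cancel_left[OF nz])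
    then show ?thesis unfolding F1lo_def F1hi_def by simp
  qed
  finally have F1le: "S1 \<mu> t \<le> F1hi" .
  have Flo0: "Flo \<ge> 0" unfolding Flo_def using m by simp
  have F1lo0: "F1lo \<ge> 0" unfolding F1lo_def using m by simp
  have a: "Flo^2 \<le> S0 \<mu> t ^ 2" by (rule power_mono[OF Fge Flo0])
  have b: "Flo * F1lo \<le> S0 \<mu> t * S1 \<mu> t" by (rule mult_mono[OF Fge F1ge]) (use Fge Flo0 F1lo0 in auto)
  have c: "S1 \<mu> t ^ 2 \<le> F1hi^2" by (rule power_mono[OF F1le]) (use F1ge F1lo0 in simp)
  have b': "(1-2*\<mu>) * (Flo * F1lo) \<le> (1-2*\<mu>) * (S0 \<mu> t * S1 \<mu> t)"
    by (rule mult_left_mono[OF b]) (use m in simp)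
  have c': "t * S1 \<mu> t ^ 2 \<le> t * F1hi^2" by (rule mult_left_mono[OF c]) (use t0 in simp)
  have D: "Dfun \<mu> t \<ge> 2*Flo^2 + (1-2*\<mu>) * (Flo * F1lo) - 2 * (t * F1hi^2)"
    unfolding Dfun_def using a b' c' by (simp add: algebra_simps)
  have "\<mu> * (2+\<mu>)^2 * (2*Flo^2 + (1-2*\<mu>) * (Flo * F1lo) - 2 * (t * F1hi^2)) > 0"
    unfolding Flo_def F1lo_def F1hi_def t_def Eid[OF m(1)] using poly_pos[OF m] m by simp
  then have "2*Flo^2 + (1-2*\<mu>) * (Flo * F1lo) - 2 * (t * F1hi^2) > 0"
    by (rule zero_less_mult_pos) (use m in simp)
  with D show ?thesis unfolding t_def by simp
qed



lemma S0S1_pos: "0 < \<mu> \<Longrightarrow> 0 \<le> t \<Longrightarrow> S0 \<mu> t * S1 \<mu> t > 0"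
  using S0_pos[of \<mu> t] S1_pos[of \<mu> t] by (smt (verit) divide_pos_pos mult_pos_pos)

lemma M_dec: assumes m: "0 < \<mu>" "\<mu> < 1/2" and "0 < s" "s < r"
  shows "Mfun \<mu> r < Mfun \<mu> s"
proof (rule DERIV_neg_imp_decreasing[OF assms(4)])
  fix x assume x: "s \<le> x" "x \<le> r"
  then have x0: "x > 0" using assms by simp
  have "x powr (\<mu> - 1/2) * ((2*\<mu>-1)/(2*x)) * (S0 \<mu> x * S1 \<mu> x) < 0"
    using x0 m S0S1_pos[OF m(1), of x]
    by (intro mult_neg_pos mult_pos_neg) (auto intro: divide_neg_pos)
  with Mfun_deriv[OF m(1) x0] show "\<exists>y. (Mfun \<mu> has_real_derivative y) (at x) \<and> y < 0" by blast
qed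

lemma M_eventually_neg: assumes m: "0 < \<mu>" "\<mu> < 1/2"
  shows "\<exists>t2>0. Mfun \<mu> t2 < 0"
proof -
  define C where "C = (1 - 2*\<mu>) * bc \<mu> 2 / (2*\<mu>)"
  have C0: "C > 0" unfolding C_def using m bc_pos[OF m(1), of 2] by simp
  define N where "N t = Mfun \<mu> t + C * t" for t
  define t2 where "t2 = 1 + (\<bar>Mfun \<mu> 1\<bar> + 1) / C"
  have t21: "t2 \<ge> 1" unfolding t2_def using C0 by simp
  have "N t2 \<le> N 1"
  proof (rule DERIV_nonpos_imp_nonincreasing[OF t21])
    fix x assume x: "1 \<le> x" "x \<le> t2"
    then have x0: "x > 0" by simp
    let ?M' = "x powr (\<mu> - 1/2) * ((2*\<mu>-1)/(2*x)) * (S0 \<mu> x * S1 \<mu> x)"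
    have dN: "(N has_real_derivative ?M' + C) (at x)"
    proof -
      have dC: "((\<lambda>t. C*t) has_real_derivative C) (at x)" by (auto intro!: derivative_eq_intros)
      show ?thesis unfolding N_def[abs_def] using DERIV_add[OF Mfun_deriv[OF m(1) x0] dC] by simp
    qed
    have S0ge: "S0 \<mu> x \<ge> bc \<mu> 2 * x^2"
    proof -
      have "bc \<mu> 2 * x^2 \<le> (\<Sum>n<3. bc \<mu> n * x^n)"
        using bc_pos[OF m(1), of 0] bc_pos[OF m(1), of 1] x0
        by (simp add: numeral_eq_Suc bc0 bc1s)
      also have "\<dots> \<le> S0 \<mu> x" by (rule S0_ge) (use m x0 in auto)
      finally show ?thesis .
    qed
    have S1ge: "S1 \<mu> x \<ge> 1/\<mu>" by (rule S1_pos) (use m x0 in auto)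
    have "S0 \<mu> x * S1 \<mu> x \<ge> bc \<mu> 2 * x^2 * (1/\<mu>)"
      by (rule mult_mono[OF S0ge S1ge]) (use S0_pos[OF m(1), of x] x0 m bc_pos[OF m(1), of 2] in auto)
    moreover have neg: "x powr (\<mu> - 1/2) * ((2*\<mu>-1)/(2*x)) \<le> 0"
      using x0 m by (intro mult_nonneg_nonpos) (auto intro: divide_nonpos_pos)
    ultimately have "?M' \<le> x powr (\<mu> - 1/2) * ((2*\<mu>-1)/(2*x)) * (bc \<mu> 2 * x^2 * (1/\<mu>))"
      by (intro mult_left_mono_neg) auto
    also have "\<dots> = - C * (x powr (\<mu> - 1/2) * x)"
      unfolding C_def using x0 m by (simp add: field_simps power2_eq_square)
    also have "x powr (\<mu> - 1/2) * x = x powr (\<mu> + 1/2)"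
    proof -
      have pa: "x powr ((\<mu> - 1/2) + 1) = x powr (\<mu> - 1/2) * x powr 1" by (rule powr_add)
      have eq: "(\<mu> - 1/2) + 1 = \<mu> + 1/2" by simp
      have "x powr (\<mu> + 1/2) = x powr (\<mu> - 1/2) * x powr 1" using pa by (simp only: eq)
      then show ?thesis using x0 by simp
    qed
    also have "- C * x powr (\<mu> + 1/2) \<le> - C"
    proof -
      have "x powr (\<mu> + 1/2) \<ge> 1" using x m by (intro ge_one_powr_ge_zero) auto
      then show ?thesis using C0 by simp
    qed
    finally have "?M' + C \<le> 0" by simp
    then show "\<exists>y. (N has_real_derivative y) (at x) \<and> y \<le> 0" using dN by blast
  qed
  then have "Mfun \<mu> t2 \<le> Mfun \<mu> 1 + C - C * t2" unfolding N_def by simp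
  also have "\<dots> = Mfun \<mu> 1 - \<bar>Mfun \<mu> 1\<bar> - 1" unfolding t2_def using C0 by (simp add: field_simps)
  also have "\<dots> < 0" by simp
  finally show ?thesis using t21 by (intro exI[of _ t2]) auto
qed

lemma M_cont: "0 < \<mu> \<Longrightarrow> 0 < a \<Longrightarrow> continuous_on {a..b} (Mfun \<mu>)"
  by (rule continuous_at_imp_continuous_on)
     (auto intro!: DERIV_isCont[OF Mfun_deriv])

lemma T_exists: assumes m: "0 < \<mu>" "\<mu> < 1/2"
  shows "\<exists>T>\<mu>*(1+\<mu>). (\<forall>t. 0 < t \<longrightarrow> t < T \<longrightarrow> Dfun \<mu> t > 0) \<and> (\<forall>t. t > T \<longrightarrow> Dfun \<mu> t < 0)"
proof -
  define t1 where "t1 = \<mu>*(1+\<mu>)"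
  have t10: "t1 > 0" unfolding t1_def using m by simp
  have M1: "Mfun \<mu> t1 > 0" unfolding Mfun_def t1_def using D_pos[OF m] m by simp
  obtain t2 where t2: "t2 > 0" "Mfun \<mu> t2 < 0" using M_eventually_neg[OF m] by blast
  have "t1 \<le> t2"
  proof (rule ccontr)
    assume "\<not> t1 \<le> t2"
    then have "Mfun \<mu> t1 < Mfun \<mu> t2" using M_dec[OF m t2(1)] by simp
    with M1 t2 show False by simp
  qed
  then obtain T where T: "t1 \<le> T" "T \<le> t2" "Mfun \<mu> T = 0"
    using IVT2'[of "Mfun \<mu>" t2 0 t1] M1 t2 M_cont[OF m(1) t10] by auto
  have Tt1: "T > t1" using T M1 by (cases "T = t1") auto
  have pw: "t powr (\<mu> - 1/2) > 0" if "t > 0" for t using that by simp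
  have pos: "Dfun \<mu> t > 0" if "0 < t" "t < T" for t
  proof -
    have "Mfun \<mu> t > 0" using M_dec[OF m that] T by simp
    then show ?thesis unfolding Mfun_def using pw[OF that(1)] by (simp add: zero_less_mult_iff)
  qed
  have neg: "Dfun \<mu> t < 0" if "t > T" for t
  proof -
    have T0: "T > 0" using Tt1 t10 by simp
    have "Mfun \<mu> t < 0" using M_dec[OF m T0 that] T by simp
    then show ?thesis unfolding Mfun_def using pw[of t] that T0 by (simp add: mult_less_0_iff)
  qed
  show ?thesis using Tt1 pos neg unfolding t1_def by blast
qed



lemma strict_cvx_core:
  fixes f f' :: "real \<Rightarrow> real"
  assumes I1: "\<And>x y c. x\<in>S \<Longrightarrow> y\<in>S \<Longrightarrow> x\<le>c \<Longrightarrow> c\<le>y \<Longrightarrow> c\<in>S"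
    and D1: "\<And>x. x\<in>S \<Longrightarrow> (f has_real_derivative f' x) (at x)"
    and M1: "\<And>x y. x\<in>S \<Longrightarrow> y\<in>S \<Longrightarrow> x<y \<Longrightarrow> f' x < f' y"
    and ab: "a \<in> S" "b \<in> S" "a < b" and u: "0 < u" "u < 1"
  shows "f (u * a + (1 - u) * b) < u * f a + (1 - u) * f b"
proof -
  define m where "m = u * a + (1 - u) * b"
  have ma: "m - a = (1-u)*(b-a)" unfolding m_def by (simp add: algebra_simps)
  moreover have "(1-u)*(b-a) > 0" using ab u by simp
  ultimately have am: "a < m" by simp
  have bm: "b - m = u*(b-a)" unfolding m_def by (simp add: algebra_simps)
  moreover have "u*(b-a) > 0" using ab u by simp
  ultimately have mb: "m < b" by simp
  obtain \<xi>1 where x1: "a < \<xi>1" "\<xi>1 < m" "f m - f a = (m - a) * f' \<xi>1"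
    using MVT2[OF am, of f f'] D1 I1 ab am mb by (meson less_imp_le order.trans)
  obtain \<xi>2 where x2: "m < \<xi>2" "\<xi>2 < b" "f b - f m = (b - m) * f' \<xi>2"
    using MVT2[OF mb, of f f'] D1 I1 ab am mb by (meson less_imp_le order.trans)
  have S1: "\<xi>1 \<in> S" using I1[OF ab(1) ab(2)] x1 am mb by simp
  have S2: "\<xi>2 \<in> S" using I1[OF ab(1) ab(2)] x2 am mb by simp
  have lt: "f' \<xi>1 < f' \<xi>2" using M1[OF S1 S2] x1 x2 by simp
  have "u * f a + (1 - u) * f b - f m = u * (f a - f m) + (1-u) * (f b - f m)" by (simp add: algebra_simps)
  also have "\<dots> = u * (-((m - a) * f' \<xi>1)) + (1-u) * ((b - m) * f' \<xi>2)"
  proof -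
    have e1: "f a - f m = -((m - a) * f' \<xi>1)" using x1(3) by simp
    have e2: "f b - f m = (b - m) * f' \<xi>2" using x2(3) by simp
    show ?thesis by (simp only: e1 e2)
  qed
  also have "\<dots> = u * (1-u) * (b - a) * (f' \<xi>2 - f' \<xi>1)"
    unfolding ma bm by (simp add: algebra_simps)
  also have "\<dots> > 0" using u ab lt by simp
  finally show ?thesis unfolding m_def by simp
qed

lemma strict_cvx:
  fixes f f' :: "real \<Rightarrow> real"
  assumes cv: "convex S"
    and I1: "\<And>x y c. x\<in>S \<Longrightarrow> y\<in>S \<Longrightarrow> x\<le>c \<Longrightarrow> c\<le>y \<Longrightarrow> c\<in>S"
    and D1: "\<And>x. x\<in>S \<Longrightarrow> (f has_real_derivative f' x) (at x)"
    and M1: "\<And>x y. x\<in>S \<Longrightarrow> y\<in>S \<Longrightarrow> x<y \<Longrightarrow> f' x < f' y"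
  shows "strict_convex_on S f"
  unfolding strict_convex_on_def
proof (intro conjI cv ballI allI impI)
  fix x y u :: real assume xy: "x \<in> S" "y \<in> S" and h: "x \<noteq> y \<and> 0 < u \<and> u < 1"
  show "f (u * x + (1 - u) * y) < u * f x + (1 - u) * f y"
  proof (cases "x < y")
    case True
    have "0 < u" "u < 1" using h by auto
    from strict_cvx_core[where S=S and f=f and f'=f' and a=x and b=y and u=u, OF I1 D1 M1 xy True this] show ?thesis .
  next
    case False
    then have yx: "y < x" using h by simp
    have u1: "0 < 1-u" "1-u < 1" using h by auto
    have "f ((1-u) * y + (1 - (1-u)) * x) < (1-u) * f y + (1 - (1-u)) * f x"
      by (rule strict_cvx_core[OF I1 D1 M1 xy(2) xy(1) yx u1])
    then show ?thesis by (simp add: algebra_simps)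
  qed
qed

definition H1 :: "real \<Rightarrow> real \<Rightarrow> real" where
  "H1 \<mu> x = (x/2) * S1 \<mu> (x^2/4) / S0 \<mu> (x^2/4)"

lemma dq: "((\<lambda>x::real. x^2/4) has_real_derivative x/2) (at x)"
  by (auto intro!: derivative_eq_intros)

lemma h_deriv: assumes "\<nu> > -1"
  shows "((\<lambda>x. ln (calI \<nu> x)) has_real_derivative H1 (\<nu>+1) x) (at x)"
proof -
  have m: "\<nu> + 1 > 0" using assms by simp
  have p: "S0 (\<nu>+1) (x^2/4) > 0" using S0_pos[OF m, of "x^2/4"] by simp
  have "((\<lambda>x. ln (S0 (\<nu>+1) (x^2/4))) has_real_derivative
          inverse (S0 (\<nu>+1) (x^2/4)) * (S1 (\<nu>+1) (x^2/4) * (x/2))) (at x)"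
    by (rule DERIV_chain2[OF DERIV_ln[OF p] S0_chain[OF m dq]])
  then show ?thesis unfolding calI_eq H1_def by (simp add: field_simps)
qed

lemma H1_deriv: assumes m: "\<mu> > 0"
  shows "(H1 \<mu> has_real_derivative Dfun \<mu> (x^2/4) / (2 * S0 \<mu> (x^2/4)^2)) (at x)"
proof -
  let ?t = "x^2/4"
  have p: "S0 \<mu> ?t \<noteq> 0" using S0_pos[OF m, of ?t] by simp
  have dh: "((\<lambda>x::real. x/2) has_real_derivative 1/2) (at x)" by (auto intro!: derivative_eq_intros)
  have dp: "((\<lambda>x. x/2 * S1 \<mu> (x^2/4)) has_real_derivative
       1/2 * S1 \<mu> ?t + S2 \<mu> ?t * (x/2) * (x/2)) (at x)"
    by (rule DERIV_mult[OF dh S1_chain[OF m dq]])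
  have dd: "((\<lambda>x. x/2 * S1 \<mu> (x^2/4) / S0 \<mu> (x^2/4)) has_real_derivative
       ((1/2 * S1 \<mu> ?t + S2 \<mu> ?t * (x/2) * (x/2)) * S0 \<mu> ?t - x/2 * S1 \<mu> ?t * (S1 \<mu> ?t * (x/2)))
        / (S0 \<mu> ?t * S0 \<mu> ?t)) (at x)"
    by (rule DERIV_divide[OF dp S0_chain[OF m dq] p])
  have Heq: "H1 \<mu> = (\<lambda>x. x/2 * S1 \<mu> (x^2/4) / S0 \<mu> (x^2/4))" by (rule ext) (simp add: H1_def)
  have e: "?t * S2 \<mu> ?t = S0 \<mu> ?t - \<mu> * S1 \<mu> ?t" using ODE[OF m, of ?t] by simp
  have "(1/2 * S1 \<mu> ?t + S2 \<mu> ?t * (x/2) * (x/2)) * S0 \<mu> ?t - x/2 * S1 \<mu> ?t * (S1 \<mu> ?t * (x/2))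
     = 1/2 * S1 \<mu> ?t * S0 \<mu> ?t + (?t * S2 \<mu> ?t) * S0 \<mu> ?t - ?t * S1 \<mu> ?t ^ 2"
    by (simp add: algebra_simps power2_eq_square)
  also have "\<dots> = Dfun \<mu> ?t / 2" unfolding e Dfun_def by (simp add: algebra_simps power2_eq_square)
  finally have Aeq: "(1/2 * S1 \<mu> ?t + S2 \<mu> ?t * (x/2) * (x/2)) * S0 \<mu> ?t - x/2 * S1 \<mu> ?t * (S1 \<mu> ?t * (x/2))
     = Dfun \<mu> ?t / 2" .
  show ?thesis unfolding Heq by (rule DERIV_cong[OF dd]) (simp only: Aeq, simp add: power2_eq_square)
qed



lemma first_zero_le: assumes m: "0 < \<mu>" "\<mu> < 1/2" and nu: "\<nu> = \<mu> - 1"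
  shows "first_zero_J \<nu> \<le> 2 * sqrt (\<mu>*(1+\<mu>))"
proof -
  define t1 where "t1 = \<mu>*(1+\<mu>)"
  define w where "w = 2 * sqrt t1"
  define g where "g x = S0 \<mu> (-(x^2/4))" for x
  have t10: "t1 > 0" unfolding t1_def using m by simp
  have w0: "w > 0" unfolding w_def using t10 by simp
  have gw: "g w < 0" unfolding g_def w_def using alt_neg[OF m] t10
    by (simp add: power_mult_distrib t1_def)
  have g0: "g 0 > 0" unfolding g_def using S0_pos[OF m(1), of 0] by simp
  have gd: "(g has_real_derivative S1 \<mu> (-(x^2/4)) * (-(x/2))) (at x)" for x
    unfolding g_def[abs_def] by (rule S0_chain[OF m(1)]) (auto intro!: derivative_eq_intros)
  have gc: "continuous_on UNIV g"
    by (rule continuous_at_imp_continuous_on) (use gd DERIV_isCont in blast)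
  define Z where "Z = {0..w} \<inter> {x. g x = 0}"
  have Zc: "closed Z" unfolding Z_def
    by (intro closed_Int closed_atLeastAtMost closed_Collect_eq gc continuous_on_const)
  have Zne: "Z \<noteq> {}"
  proof -
    obtain x where "0 \<le> x" "x \<le> w" "g x = 0"
      using IVT2'[of g w 0 0] gw g0 w0 continuous_on_subset[OF gc] by force
    then show ?thesis unfolding Z_def by auto
  qed
  have Zb: "bdd_below Z" unfolding Z_def by (rule bdd_belowI[of _ 0]) auto
  define j where "j = Inf Z"
  have jZ: "j \<in> Z" unfolding j_def by (rule closed_contains_Inf[OF Zne Zb Zc])
  have j0: "j > 0" using jZ g0 unfolding Z_def by (cases "j = 0") auto
  have jw: "j \<le> w" using jZ unfolding Z_def by auto
  have gj: "g j = 0" using jZ unfolding Z_def by auto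
  have nz: "g x \<noteq> 0" if "0 < x" "x < j" for x
  proof
    assume "g x = 0"
    then have "x \<in> Z" unfolding Z_def using that jw by auto
    then have "j \<le> x" unfolding j_def by (rule cInf_lower[OF _ Zb])
    with that show False by simp
  qed
  have J: "besselJ \<nu> x = 0 \<longleftrightarrow> g x = 0" if "x > 0" for x
  proof -
    have "\<nu> > -1" using nu m by simp
    from bessel_eq[OF this that] have "besselJ \<nu> x = (x/2) powr \<nu> / Gamma \<mu> * g x"
      unfolding g_def nu by simp
    moreover have "(x/2) powr \<nu> / Gamma \<mu> \<noteq> 0" using that m Gamma_real_pos[OF m(1)] by (simp del: Gamma_real_pos)
    ultimately show ?thesis by simp
  qed
  define P where "P j' \<longleftrightarrow> 0 < j' \<and> besselJ \<nu> j' = 0 \<and> (\<forall>x. 0 < x \<and> x < j' \<longrightarrow> besselJ \<nu> x \<noteq> 0)" for j'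
  have Pj: "P j" unfolding P_def using j0 gj nz J by auto
  have uniq: "j' = j" if "P j'" for j'
  proof -
    have a: "0 < j'" "g j' = 0" "\<forall>x. 0 < x \<and> x < j' \<longrightarrow> g x \<noteq> 0"
      using that J unfolding P_def by auto
    show ?thesis
    proof (rule ccontr)
      assume "j' \<noteq> j"
      then consider "j' < j" | "j < j'" by linarith
      then show False
      proof cases
        case 1 then show False using nz[of j'] a by simp
      next
        case 2 then show False using a(3) j0 gj by auto
      qed
    qed
  qed
  have th: "(THE j. P j) = j"
  proof (rule the_equality[of P j])
    show "P j" by (rule Pj)
  next
    fix j' assume "P j'" then show "j' = j" by (rule uniq)
  qed
  have PP: "P = (\<lambda>j'. 0 < j' \<and> besselJ \<nu> j' = 0 \<and> (\<forall>x. 0 < x \<and> x < j' \<longrightarrow> besselJ \<nu> x \<noteq> 0))"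
    by (rule ext) (simp only: P_def)
  have "first_zero_J \<nu> = (THE j. P j)" unfolding first_zero_J_def PP by (rule refl)
  with th have "first_zero_J \<nu> = j" by simp
  then show ?thesis using jw unfolding w_def t1_def by simp
qed


theorem mainTheorem12:
  fixes \<nu> :: real
  assumes "-1 < \<nu>" and "\<nu> < -1/2"
  shows "\<exists>z. z \<ge> first_zero_J \<nu> \<and>
           strict_convex_on {0<..<z} (\<lambda>x. ln (calI \<nu> x)) \<and>
           strict_concave_on {z<..} (\<lambda>x. ln (calI \<nu> x))
         \<and> \<not> convex_on UNIV (\<lambda>x. ln (calI \<nu> x))"
proof -
  define \<mu> where "\<mu> = \<nu> + 1"
  have m: "0 < \<mu>" "\<mu> < 1/2" unfolding \<mu>_def using assms by auto
  have nu: "\<nu> = \<mu> - 1" unfolding \<mu>_def by simp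
  obtain T where T: "T > \<mu>*(1+\<mu>)" "\<And>t. 0 < t \<Longrightarrow> t < T \<Longrightarrow> Dfun \<mu> t > 0"
      "\<And>t. t > T \<Longrightarrow> Dfun \<mu> t < 0"
    using T_exists[OF m] by blast
  have t10: "\<mu>*(1+\<mu>) > 0" using m by simp
  have T0: "T > 0" using T(1) t10 by simp
  define z where "z = 2 * sqrt T"
  define h where "h x = ln (calI \<nu> x)" for x
  have hd: "(h has_real_derivative H1 \<mu> x) (at x)" for x
    unfolding h_def[abs_def] \<mu>_def by (rule h_deriv) (use assms in simp)
  have H1d: "(H1 \<mu> has_real_derivative Dfun \<mu> (x^2/4) / (2 * S0 \<mu> (x^2/4)^2)) (at x)" for x
    by (rule H1_deriv[OF m(1)])
  have S0p: "S0 \<mu> (x^2/4) ^ 2 > 0" for x using S0_pos[OF m(1), of "x^2/4"] by simp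
  have sqlt: "x^2/4 < T" if "0 \<le> x" "x < z" for x
  proof -
    have "(x/2)^2 < (sqrt T)^2" using that unfolding z_def by (intro power_strict_mono) auto
    then show ?thesis using T0 by (simp add: power_divide)
  qed
  have sqgt: "x^2/4 > T" if "x > z" for x
  proof -
    have "(sqrt T)^2 < (x/2)^2" using that T0 unfolding z_def by (intro power_strict_mono) auto
    then show ?thesis using T0 by (simp add: power_divide)
  qed
  have cvx: "strict_convex_on {0<..<z} h"
  proof (rule strict_cvx[where f'="H1 \<mu>"])
    show "convex {0<..<z}" by simp
    show "\<And>x y c. x \<in> {0<..<z} \<Longrightarrow> y \<in> {0<..<z} \<Longrightarrow> x \<le> c \<Longrightarrow> c \<le> y \<Longrightarrow> c \<in> {0<..<z}" by auto
    show "\<And>x. x \<in> {0<..<z} \<Longrightarrow> (h has_real_derivative H1 \<mu> x) (at x)" by (rule hd)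
    fix x y assume xy: "x \<in> {0<..<z}" "y \<in> {0<..<z}" "x < y"
    show "H1 \<mu> x < H1 \<mu> y"
    proof (rule DERIV_pos_imp_increasing[OF xy(3)])
      fix c assume c: "x \<le> c" "c \<le> y"
      have "Dfun \<mu> (c^2/4) > 0" using T(2)[of "c^2/4"] sqlt[of c] c xy by auto
      then have "Dfun \<mu> (c^2/4) / (2 * S0 \<mu> (c^2/4)^2) > 0" using S0p[of c] by simp
      then show "\<exists>y. (H1 \<mu> has_real_derivative y) (at c) \<and> y > 0" using H1d by blast
    qed
  qed
  have ccv: "strict_concave_on {z<..} h"
    unfolding strict_concave_on_def
  proof (rule strict_cvx[where f'="\<lambda>x. - H1 \<mu> x"])
    show "convex {z<..}" by simp
    show "\<And>x y c. x \<in> {z<..} \<Longrightarrow> y \<in> {z<..} \<Longrightarrow> x \<le> c \<Longrightarrow> c \<le> y \<Longrightarrow> c \<in> {z<..}" by auto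
    show "\<And>x. x \<in> {z<..} \<Longrightarrow> ((\<lambda>x. - h x) has_real_derivative - H1 \<mu> x) (at x)"
      by (rule DERIV_minus[OF hd])
    fix x y assume xy: "x \<in> {z<..}" "y \<in> {z<..}" "x < y"
    have "H1 \<mu> y < H1 \<mu> x"
    proof (rule DERIV_neg_imp_decreasing[OF xy(3)])
      fix c assume c: "x \<le> c" "c \<le> y"
      have "Dfun \<mu> (c^2/4) < 0" using T(3)[of "c^2/4"] sqgt[of c] c xy by auto
      then have "Dfun \<mu> (c^2/4) / (2 * S0 \<mu> (c^2/4)^2) < 0" using S0p[of c]
        by (simp add: divide_neg_pos)
      then show "\<exists>y. (H1 \<mu> has_real_derivative y) (at c) \<and> y < 0" using H1d by blast
    qed
    then show "- H1 \<mu> x < - H1 \<mu> y" by simp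
  qed
  have ncv: "\<not> convex_on UNIV h"
  proof
    assume cv: "convex_on UNIV h"
    have "h ((1 - 1/2) *\<^sub>R (z+1) + (1/2) *\<^sub>R (z+2)) \<le> (1 - 1/2) * h (z+1) + (1/2) * h (z+2)"
      by (rule convex_onD[OF cv]) auto
    moreover have "- h ((1/2) * (z+1) + (1 - 1/2) * (z+2)) < (1/2) * (- h (z+1)) + (1 - 1/2) * (- h (z+2))"
    proof -
      have st: "\<forall>x\<in>{z<..}. \<forall>y\<in>{z<..}. \<forall>u::real. x \<noteq> y \<and> 0 < u \<and> u < 1 \<longrightarrow>
         - h (u * x + (1 - u) * y) < u * (- h x) + (1 - u) * (- h y)"
        using ccv unfolding strict_concave_on_def strict_convex_on_def by blast
      show ?thesis by (rule st[rule_format]) auto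
    qed
    ultimately show False by (simp add: algebra_simps)
  qed
  have zfz: "first_zero_J \<nu> \<le> z"
  proof -
    have "first_zero_J \<nu> \<le> 2 * sqrt (\<mu>*(1+\<mu>))" by (rule first_zero_le[OF m nu])
    also have "\<dots> \<le> z" unfolding z_def using T(1) by simp
    finally show ?thesis .
  qed
  show ?thesis
    by (intro exI[of _ z] conjI zfz) (use cvx ccv ncv in \<open>simp_all add: h_def[abs_def]\<close>)
qed


end
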